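(* Let $f\colon X\to X$ be a homeomorphism of a connected compact metric space $(X,\operatorname{dist})$. Let $D\colon X^3_{\delta_0}\to\mathbb{R}$ be a catenary local metric which is locally minimizing with constant $\delta\in(0,\delta_0)$. Define $\rho(x,y)=\inf_{n\ge2}\ \inf_{a\in C^\delta_n(x,y)}\ \sum_{i=1}^{n-1}D_{a_i}(a_i,a_{i+1})$. Then $\rho$ is a catenary metric on $X$.
   Context: Let $X^3_\delta=\{(x,y,z)\in X^3:y,z\in B_\delta(x)\}$, where $B_\delta(x)$ is the open ball of radius $\delta$. A local metric is a continuous $D\colon X^3_{\delta_0}\to\mathbb{R}$, written $D_x(y,z)$, such that each $D_x$ is a metric on $B_{\delta_0}(x)$ and $D_x(x,y)=D_y(x,y)$ whenever $\operatorname{dist}(x,y)<\delta_0$. $D$ is catenary if $D_{f(x)}(f(y),f(z))-2D_x(y,z)+D_{f^{-1}(x)}(f^{-1}(y),f^{-1}(z))=D_x(y,z)$ whenever all terms are defined. $D$ is locally minimizing with constant $\delta$ if $\operatorname{dist}(x,y)<\delta$ implies $D_x(x,y)\le D_z(x,y)$ for all $z\in B_\delta(x)\cap B_\delta(y)$. $C^\delta_n(x,y)=\{a=(a_1,\dots,a_n)\in X^n: a_1=x,\ a_n=y,\ \operatorname{dist}(a_i,a_{i+1})\le\delta \text{ for } i=1,\dots,n-1\}$. A catenary metric is a metric $\rho$ on $X$ defining its topology for which there is $\delta'>0$ such that $\rho(f(x),f(y))-2\rho(x,y)+\rho(f^{-1}(x),f^{-1}(y))=\rho(x,y)$ whenever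 $\operatorname{dist}(x,y)\le\delta'$. *)

theory Defs
  imports "HOL-Analysis.Analysis"
begin

definition triples :: "real \<Rightarrow> ('a::metric_space \<times> 'a \<times> 'a) set" where
  "triples \<delta> = {(x,y,z). dist x y < \<delta> \<and> dist x z < \<delta>}"

definition is_metric_on :: "'a set \<Rightarrow> ('a \<Rightarrow> 'a \<Rightarrow> real) \<Rightarrow> bool" where
  "is_metric_on S d \<longleftrightarrow>
     (\<forall>y\<in>S. \<forall>z\<in>S. d y z \<ge> 0 \<and> (d y z = 0 \<longleftrightarrow> y = z) \<and> d y z = d z y) \<and>
     (\<forall>y\<in>S. \<forall>z\<in>S. \<forall>w\<in>S. d y w \<le> d y z + d z w)"

text \<open>Local metric D : X^3_{delta0} -> R, written D x y z = D_x(y,z).\<close>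
definition local_metric :: "real \<Rightarrow> ('a::metric_space \<Rightarrow> 'a \<Rightarrow> 'a \<Rightarrow> real) \<Rightarrow> bool" where
  "local_metric \<delta>0 D \<longleftrightarrow>
     continuous_on (triples \<delta>0) (\<lambda>(x,y,z). D x y z) \<and>
     (\<forall>x. is_metric_on (ball x \<delta>0) (D x)) \<and>
     (\<forall>x y. dist x y < \<delta>0 \<longrightarrow> D x x y = D y x y)"

text \<open>Catenary local metric w.r.t. f with inverse g, whenever all terms are defined.\<close>
definition catenary_local :: "real \<Rightarrow> ('a::metric_space \<Rightarrow> 'a) \<Rightarrow> ('a \<Rightarrow> 'a) \<Rightarrow> ('a \<Rightarrow> 'a \<Rightarrow> 'a \<Rightarrow> real) \<Rightarrow> bool" where
  "catenary_local \<delta>0 f g D \<longleftrightarrow>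
     (\<forall>x y z. (x,y,z) \<in> triples \<delta>0 \<and> (f x, f y, f z) \<in> triples \<delta>0 \<and> (g x, g y, g z) \<in> triples \<delta>0 \<longrightarrow>
        D (f x) (f y) (f z) - 2 * D x y z + D (g x) (g y) (g z) = D x y z)"

definition locally_minimizing :: "real \<Rightarrow> ('a::metric_space \<Rightarrow> 'a \<Rightarrow> 'a \<Rightarrow> real) \<Rightarrow> bool" where
  "locally_minimizing \<delta> D \<longleftrightarrow>
     (\<forall>x y. dist x y < \<delta> \<longrightarrow> (\<forall>z \<in> ball x \<delta> \<inter> ball y \<delta>. D x x y \<le> D z x y))"

text \<open>C^delta_n(x,y): chains a = (a_1..a_n), represented as lists of length n (0-indexed).\<close>
definition chains :: "real \<Rightarrow> nat \<Rightarrow> 'a::metric_space \<Rightarrow> 'a \<Rightarrow> 'a list set" where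
  "chains \<delta> n x y = {a. length a = n \<and> a ! 0 = x \<and> a ! (n - 1) = y \<and>
       (\<forall>i < n - 1. dist (a ! i) (a ! (i + 1)) \<le> \<delta>)}"

definition chain_length :: "('a \<Rightarrow> 'a \<Rightarrow> 'a \<Rightarrow> real) \<Rightarrow> 'a list \<Rightarrow> real" where
  "chain_length D a = (\<Sum>i < length a - 1. D (a ! i) (a ! i) (a ! (i + 1)))"

definition rho :: "real \<Rightarrow> ('a::metric_space \<Rightarrow> 'a \<Rightarrow> 'a \<Rightarrow> real) \<Rightarrow> 'a \<Rightarrow> 'a \<Rightarrow> real" where
  "rho \<delta> D x y = Inf {chain_length D a | a n. n \<ge> 2 \<and> a \<in> chains \<delta> n x y}"

definition metric_defining_topology :: "('a::metric_space \<Rightarrow> 'a \<Rightarrow> real) \<Rightarrow> bool" where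
  "metric_defining_topology r \<longleftrightarrow> is_metric_on UNIV r \<and>
     (\<forall>U. open U \<longleftrightarrow> (\<forall>x\<in>U. \<exists>e>0. \<forall>y. r x y < e \<longrightarrow> y \<in> U))"

definition catenary_metric :: "('a::metric_space \<Rightarrow> 'a) \<Rightarrow> ('a \<Rightarrow> 'a) \<Rightarrow> ('a \<Rightarrow> 'a \<Rightarrow> real) \<Rightarrow> bool" where
  "catenary_metric f g r \<longleftrightarrow> metric_defining_topology r \<and>
     (\<exists>\<delta>'>0. \<forall>x y. dist x y \<le> \<delta>' \<longrightarrow> r (f x) (f y) - 2 * r x y + r (g x) (g y) = r x y)"

end

theory Submission imports Defs begin

inductive R :: "real \<Rightarrow> ('a::metric_space \<Rightarrow> 'a \<Rightarrow> 'a \<Rightarrow> real) \<Rightarrow> 'a \<Rightarrow> 'a \<Rightarrow> real \<Rightarrow> bool"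
  for \<delta> D where
  base: "dist x y \<le> \<delta> \<Longrightarrow> R \<delta> D x y (D x x y)"
| step: "R \<delta> D x y c \<Longrightarrow> dist y z \<le> \<delta> \<Longrightarrow> R \<delta> D x z (c + D y y z)"

lemma chain_length_take:
  assumes "Suc m \<le> length a"
  shows "chain_length D (take (Suc m) a) = (\<Sum>i<m. D (a ! i) (a ! i) (a ! (i + 1)))"
  unfolding chain_length_def using assms by (intro sum.cong) auto

lemma chains_R_aux:
  "\<forall>a y. length a = Suc (Suc k) \<and> a ! 0 = x \<and> a ! Suc k = y \<and>
      (\<forall>i < Suc k. dist (a ! i) (a ! (i + 1)) \<le> \<delta>) \<longrightarrow> R \<delta> D x y (chain_length D a)"
proof (induction k)
  case 0
  show ?case
  proof (intro allI impI)
    fix a y assume h: "length a = Suc (Suc 0) \<and> a ! 0 = x \<and> a ! Suc 0 = y \<and>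
      (\<forall>i < Suc 0. dist (a ! i) (a ! (i + 1)) \<le> \<delta>)"
    then have "chain_length D a = D x x y" by (simp add: chain_length_def)
    moreover have "dist x y \<le> \<delta>" using h by force
    ultimately show "R \<delta> D x y (chain_length D a)" by (simp add: R.base)
  qed
next
  case (Suc k)
  show ?case
  proof (intro allI impI)
    fix a y assume h: "length a = Suc (Suc (Suc k)) \<and> a ! 0 = x \<and> a ! Suc (Suc k) = y \<and>
      (\<forall>i < Suc (Suc k). dist (a ! i) (a ! (i + 1)) \<le> \<delta>)"
    define b where "b = take (Suc (Suc k)) a"
    have "R \<delta> D x (a ! Suc k) (chain_length D b)"
      using Suc.IH[rule_format, of b "a ! Suc k"] h unfolding b_def by auto
    moreover have "dist (a ! Suc k) y \<le> \<delta>" using h by force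
    ultimately have "R \<delta> D x y (chain_length D b + D (a ! Suc k) (a ! Suc k) y)"
      by (rule R.step)
    moreover have "chain_length D a = chain_length D b + D (a ! Suc k) (a ! Suc k) y"
    proof -
      have "chain_length D a = chain_length D (take (Suc (Suc (Suc k))) a)" using h by simp
      also have "\<dots> = (\<Sum>i<Suc (Suc k). D (a ! i) (a ! i) (a ! (i + 1)))"
        by (rule chain_length_take) (use h in simp)
      also have "\<dots> = (\<Sum>i<Suc k. D (a ! i) (a ! i) (a ! (i + 1))) + D (a ! Suc k) (a ! Suc k) y"
        using h by simp
      also have "(\<Sum>i<Suc k. D (a ! i) (a ! i) (a ! (i + 1))) = chain_length D b"
        unfolding b_def by (rule chain_length_take[symmetric]) (use h in simp)
      finally show ?thesis .
    qed
    ultimately show "R \<delta> D x y (chain_length D a)" by simp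
  qed
qed

lemma chains_R: "a \<in> chains \<delta> n x y \<Longrightarrow> n \<ge> 2 \<Longrightarrow> R \<delta> D x y (chain_length D a)"
proof -
  assume a: "a \<in> chains \<delta> n x y" and n: "n \<ge> 2"
  then obtain k where k: "n = Suc (Suc k)" by (metis add_2_eq_Suc le_Suc_ex)
  show ?thesis using chains_R_aux[of k x \<delta> D] a k unfolding chains_def by auto
qed

lemma chain_length_snoc:
  assumes "a \<noteq> []"
  shows "chain_length D (a @ [z]) = chain_length D a + D (last a) (last a) z"
proof -
  obtain m where m: "length a = Suc m" using assms by (cases a) auto
  have "chain_length D (a @ [z]) = (\<Sum>i<Suc m. D ((a@[z]) ! i) ((a@[z]) ! i) ((a@[z]) ! (i + 1)))"
    unfolding chain_length_def using m by simp
  also have "\<dots> = (\<Sum>i<m. D ((a@[z]) ! i) ((a@[z]) ! i) ((a@[z]) ! (i + 1))) + D (a ! m) (a ! m) z"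
    using m by (simp add: nth_append)
  also have "(\<Sum>i<m. D ((a@[z]) ! i) ((a@[z]) ! i) ((a@[z]) ! (i + 1))) = chain_length D a"
    unfolding chain_length_def using m by (intro sum.cong) (auto simp: nth_append)
  also have "a ! m = last a" using m assms by (simp add: last_conv_nth)
  finally show ?thesis .
qed

lemma R_chains: "R \<delta> D x y c \<Longrightarrow> \<exists>a. a \<in> chains \<delta> (length a) x y \<and> length a \<ge> 2 \<and> chain_length D a = c"
proof (induction rule: R.induct)
  case (base x y)
  show ?case
    by (rule exI[of _ "[x,y]"]) (use base in \<open>auto simp: chains_def chain_length_def less_Suc_eq\<close>)
next
  case (step x y c z)
  then obtain a where a: "a \<in> chains \<delta> (length a) x y" "length a \<ge> 2" "chain_length D a = c" by blast
  have ne: "a \<noteq> []" using a by auto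
  have ly: "last a = y" using a ne by (simp add: chains_def last_conv_nth)
  show ?case
  proof (rule exI[of _ "a @ [z]"], intro conjI)
    show "chain_length D (a @ [z]) = c + D y y z" using chain_length_snoc[OF ne] a ly by simp
    show "2 \<le> length (a @ [z])" using a by simp
    show "a @ [z] \<in> chains \<delta> (length (a @ [z])) x z"
      unfolding chains_def
    proof (intro CollectI conjI allI impI)
      show "(a @ [z]) ! 0 = x" using a ne by (simp add: chains_def nth_append)
      show "(a @ [z]) ! (length (a @ [z]) - 1) = z" by simp
      fix i assume i: "i < length (a @ [z]) - 1"
      show "dist ((a @ [z]) ! i) ((a @ [z]) ! (i + 1)) \<le> \<delta>"
      proof (cases "i + 1 < length a")
        case True then show ?thesis using a by (auto simp: chains_def nth_append)
      next
        case False
        then have "i = length a - 1" using i by simp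
        then show ?thesis using step(2) ly ne by (simp add: nth_append last_conv_nth)
      qed
    qed simp
  qed
qed

lemma rho_R: "rho \<delta> D x y = Inf {c. R \<delta> D x y c}"
proof -
  have "{chain_length D a | a n. n \<ge> 2 \<and> a \<in> chains \<delta> n x y} = {c. R \<delta> D x y c}"
  proof (intro set_eqI iffI)
    fix c assume "c \<in> {chain_length D a | a n. n \<ge> 2 \<and> a \<in> chains \<delta> n x y}"
    then show "c \<in> {c. R \<delta> D x y c}" using chains_R by blast
  next
    fix c assume "c \<in> {c. R \<delta> D x y c}"
    then obtain a where "a \<in> chains \<delta> (length a) x y \<and> length a \<ge> 2 \<and> chain_length D a = c"
      using R_chains by blast
    then show "c \<in> {chain_length D a | a n. n \<ge> 2 \<and> a \<in> chains \<delta> n x y}" by blast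
  qed
  then show ?thesis unfolding rho_def by simp
qed


locale setting =
  fixes D :: "'a::metric_space \<Rightarrow> 'a \<Rightarrow> 'a \<Rightarrow> real" and \<delta>0 \<delta> :: real
  assumes cpt: "compact (UNIV :: 'a set)"
    and conn: "connected (UNIV :: 'a set)"
    and lm: "local_metric \<delta>0 D"
    and dpos: "0 < \<delta>" and dlt: "\<delta> < \<delta>0"
    and lmin: "locally_minimizing \<delta> D"
begin

lemma met: "is_metric_on (ball x \<delta>0) (D x)" using lm unfolding local_metric_def by blast

lemma bp: "dist x y < \<delta>0 \<Longrightarrow> D x x y = D y x y" using lm unfolding local_metric_def by blast

lemma Dnn: "dist x y < \<delta>0 \<Longrightarrow> 0 \<le> D x x y"
  using met[of x] dlt dpos unfolding is_metric_on_def by (auto simp: dist_commute)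

lemma Dzero: "D x x x = 0"
  using met[of x] dlt dpos unfolding is_metric_on_def by auto

lemma Dpos: "x \<noteq> y \<Longrightarrow> dist x y < \<delta>0 \<Longrightarrow> 0 < D x x y"
  using met[of x] dlt dpos unfolding is_metric_on_def
  by (metis centre_in_ball dual_order.order_iff_strict le_less_trans mem_ball zero_le_dist)

lemma Dsym: "dist x y < \<delta>0 \<Longrightarrow> D y y x = D x x y"
proof -
  assume h: "dist x y < \<delta>0"
  have "D y y x = D y x y" using met[of y] h dlt dpos unfolding is_metric_on_def
    by (auto simp: dist_commute)
  also have "\<dots> = D x x y" using bp[OF h] by simp
  finally show ?thesis .
qed

lemma Dtri: "dist y x < \<delta>0 \<Longrightarrow> dist y z < \<delta>0 \<Longrightarrow> D y x z \<le> D y x y + D y y z"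
  using met[of y] dlt dpos unfolding is_metric_on_def by auto

lemma R_nonneg: "R \<delta> D x y c \<Longrightarrow> 0 \<le> c"
  by (induction rule: R.induct) (use dlt in \<open>auto intro!: Dnn add_nonneg_nonneg\<close>)

lemma R_trans: "R \<delta> D y z c2 \<Longrightarrow> R \<delta> D x y c1 \<Longrightarrow> R \<delta> D x z (c1 + c2)"
proof (induction arbitrary: c1 rule: R.induct)
  case (base y z) then show ?case using R.step by blast
next
  case (step y w c z)
  then have "R \<delta> D x w (c1 + c)" by blast
  from R.step[OF this step(2)] show ?case by (simp add: add.assoc)
qed

lemma R_sym: "R \<delta> D x y c \<Longrightarrow> R \<delta> D y x c"
proof (induction rule: R.induct)
  case (base x y)
  then have "R \<delta> D y x (D y y x)" by (simp add: R.base dist_commute)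
  then show ?case using Dsym[of x y] base dlt by simp
next
  case (step x y c z)
  have "R \<delta> D z y (D z z y)" using step by (simp add: R.base dist_commute)
  from R_trans[OF step(3) this] have "R \<delta> D z x (D z z y + c)" .
  moreover have "D z z y = D y y z" using Dsym[of y z] step dlt by simp
  ultimately show ?case by (simp add: add.commute)
qed

lemma R_exists: "\<exists>c. R \<delta> D x y c"
proof -
  define A where "A = {y. \<exists>c. R \<delta> D x y c}"
  have xA: "x \<in> A" unfolding A_def using R.base[of x x \<delta> D] dpos by auto
  have oA: "open A" unfolding open_dist
  proof (intro ballI exI conjI allI impI)
    fix y assume "y \<in> A" then obtain c where c: "R \<delta> D x y c" unfolding A_def by blast
    show "0 < \<delta>" by (rule dpos)
    fix z assume "dist z y < \<delta>"
    then show "z \<in> A" unfolding A_def using R.step[OF c, of z] by (auto simp: dist_commute)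
  qed
  have oB: "open (- A)" unfolding open_dist
  proof (intro ballI exI conjI allI impI)
    fix y assume y: "y \<in> - A"
    show "0 < \<delta>" by (rule dpos)
    fix z assume d: "dist z y < \<delta>"
    show "z \<in> - A"
    proof
      assume "z \<in> A" then obtain c where c: "R \<delta> D x z c" unfolding A_def by blast
      from R.step[OF c, of y] d have "y \<in> A" unfolding A_def by auto
      with y show False by simp
    qed
  qed
  have "A = UNIV"
  proof (rule ccontr)
    assume "A \<noteq> UNIV"
    then have "- A \<noteq> {}" by auto
    then show False using conn oA oB xA unfolding connected_def by blast
  qed
  then show ?thesis unfolding A_def by blast
qed

definition T where "T = {p::'a\<times>'a. dist (fst p) (snd p) < \<delta>0}"

lemma contH: "continuous_on T (\<lambda>p. D (fst p) (fst p) (snd p))"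
proof -
  have c1: "continuous_on (triples \<delta>0) (\<lambda>(x,y,z). D x y z)" using lm unfolding local_metric_def by blast
  have c2: "continuous_on T (\<lambda>p::'a\<times>'a. (fst p, fst p, snd p))" by (intro continuous_intros)
  have sub: "(\<lambda>p::'a\<times>'a. (fst p, fst p, snd p)) ` T \<subseteq> triples \<delta>0"
    unfolding T_def triples_def using dlt dpos by auto
  have "continuous_on T ((\<lambda>(x,y,z). D x y z) \<circ> (\<lambda>p::'a\<times>'a. (fst p, fst p, snd p)))"
    by (rule continuous_on_compose[OF c2 continuous_on_subset[OF c1 sub]])
  then show ?thesis by (simp add: o_def case_prod_unfold)
qed

lemma cptUU: "compact (UNIV :: ('a\<times>'a) set)"
  using compact_Times[OF cpt cpt] by simp

lemma lowerL: "0 < \<epsilon> \<Longrightarrow> \<exists>L>0. \<forall>z w. \<epsilon> \<le> dist z w \<and> dist z w \<le> \<delta> \<longrightarrow> L \<le> D z z w"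
proof -
  assume e: "0 < \<epsilon>"
  define K where "K = {p::'a\<times>'a. \<epsilon> \<le> dist (fst p) (snd p) \<and> dist (fst p) (snd p) \<le> \<delta>}"
  have "closed K" unfolding K_def
    by (intro closed_Collect_conj closed_Collect_le continuous_intros)
  then have cK: "compact K" using compact_Int_closed[OF cptUU] by (metis inf_top_left)
  have sub: "K \<subseteq> T" unfolding K_def T_def using dlt by auto
  show ?thesis
  proof (cases "K = {}")
    case True
    then show ?thesis unfolding K_def by (intro exI[of _ 1]) auto
  next
    case False
    obtain p where p: "p \<in> K" "\<forall>q\<in>K. D (fst p) (fst p) (snd p) \<le> D (fst q) (fst q) (snd q)"
      using continuous_attains_inf[OF cK False continuous_on_subset[OF contH sub]] by blast
    have "0 < D (fst p) (fst p) (snd p)"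
      using p(1) e dlt unfolding K_def by (intro Dpos) auto
    then show ?thesis using p(2) unfolding K_def by (intro exI[of _ "D (fst p) (fst p) (snd p)"]) auto
  qed
qed

lemma unif: "0 < L \<Longrightarrow> \<exists>\<eta>>0. \<forall>x y. dist x y < \<eta> \<longrightarrow> D x x y < L"
proof -
  assume L: "0 < L"
  define C where "C = {p::'a\<times>'a. dist (fst p) (snd p) \<le> \<delta>}"
  have "closed C" unfolding C_def by (intro closed_Collect_le continuous_intros)
  then have cC: "compact C" using compact_Int_closed[OF cptUU] by (metis inf_top_left)
  have sub: "C \<subseteq> T" unfolding C_def T_def using dlt by auto
  have "uniformly_continuous_on C (\<lambda>p. D (fst p) (fst p) (snd p))"
    by (rule compact_uniformly_continuous[OF continuous_on_subset[OF contH sub] cC])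
  then obtain d where d: "d > 0" "\<forall>p\<in>C. \<forall>q\<in>C. dist q p < d \<longrightarrow>
      dist (D (fst q) (fst q) (snd q)) (D (fst p) (fst p) (snd p)) < L"
    unfolding uniformly_continuous_on_def using L by blast
  show ?thesis
  proof (intro exI[of _ "min d \<delta>"] conjI allI impI)
    show "0 < min d \<delta>" using d dpos by simp
    fix x y :: 'a assume xy: "dist x y < min d \<delta>"
    have "(x,x) \<in> C" "(x,y) \<in> C" unfolding C_def using xy dpos by auto
    moreover have "dist (x,y) (x,x) < d" using xy by (simp add: dist_Pair_Pair dist_commute)
    ultimately have "dist (D x x y) (D x x x) < L" using d(2) by fastforce
    then show "D x x y < L" using Dzero by (simp add: dist_real_def)
  qed
qed

lemma key:
  assumes L: "\<forall>z w. \<delta>/4 \<le> dist z w \<and> dist z w \<le> \<delta> \<longrightarrow> L \<le> D z z w"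
  shows "R \<delta> D x y c \<Longrightarrow> (dist x y < \<delta>/4 \<and> D x x y \<le> c) \<or> L \<le> c"
proof (induction rule: R.induct)
  case (base x y) then show ?case using L by force
next
  case (step x y c z)
  have Dyz: "0 \<le> D y y z" using step(2) dlt by (intro Dnn) auto
  have c0: "0 \<le> c" using R_nonneg[OF step(1)] .
  show ?case
  proof (cases "L \<le> c")
    case True then show ?thesis using Dyz by auto
  next
    case False
    then have h: "dist x y < \<delta>/4" "D x x y \<le> c" using step(3) by auto
    show ?thesis
    proof (cases "\<delta>/2 \<le> dist y z")
      case True
      then have "L \<le> D y y z" using L step(2) dpos by auto
      then show ?thesis using c0 by auto
    next
      case False
      have dxz: "dist x z < \<delta>" using h(1) False dist_triangle[of x z y] dpos by linarith
      have t: "D y x z \<le> D y x y + D y y z"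
        using h(1) False dlt dpos by (intro Dtri) (auto simp: dist_commute)
      have "D x x y = D y x y" using h(1) dlt dpos by (intro bp) auto
      moreover have "D x x z \<le> D y x z"
        using lmin dxz h(1) False dpos unfolding locally_minimizing_def
        by (auto simp: dist_commute)
      ultimately have geq: "D x x z \<le> c + D y y z" using t h(2) by linarith
      show ?thesis
      proof (cases "dist x z < \<delta>/4")
        case True then show ?thesis using geq by auto
      next
        case False
        then have "L \<le> D x x z" using L dxz by auto
        then show ?thesis using geq by auto
      qed
    qed
  qed
qed

end

context setting begin

lemma bdd: "bdd_below {c. R \<delta> D x y c}"
  using R_nonneg by (intro bdd_belowI[of _ 0]) auto

lemma ne: "{c. R \<delta> D x y c} \<noteq> {}" using R_exists by auto

lemma rho_le: "R \<delta> D x y c \<Longrightarrow> rho \<delta> D x y \<le> c"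
  unfolding rho_R by (rule cInf_lower[OF _ bdd]) simp

lemma rho_ge: "(\<And>c. R \<delta> D x y c \<Longrightarrow> B \<le> c) \<Longrightarrow> B \<le> rho \<delta> D x y"
  unfolding rho_R by (rule cInf_greatest[OF ne]) auto

lemma rho_nonneg: "0 \<le> rho \<delta> D x y" by (rule rho_ge) (rule R_nonneg)

lemma rho_refl: "rho \<delta> D x x = 0"
proof -
  have "R \<delta> D x x (D x x x)" using dpos by (intro R.base) auto
  then have "rho \<delta> D x x \<le> 0" using rho_le Dzero by fastforce
  then show ?thesis using rho_nonneg[of x x] by simp
qed

lemma rho_sym: "rho \<delta> D x y = rho \<delta> D y x"
proof -
  have "{c. R \<delta> D x y c} = {c. R \<delta> D y x c}" using R_sym by blast
  then show ?thesis unfolding rho_R by simp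
qed

lemma rho_tri: "rho \<delta> D x z \<le> rho \<delta> D x y + rho \<delta> D y z"
proof -
  have "\<forall>c2. R \<delta> D y z c2 \<longrightarrow> rho \<delta> D x z - c2 \<le> rho \<delta> D x y"
  proof (intro allI impI)
    fix c2 assume c2: "R \<delta> D y z c2"
    show "rho \<delta> D x z - c2 \<le> rho \<delta> D x y"
    proof (rule rho_ge)
      fix c1 assume "R \<delta> D x y c1"
      from R_trans[OF c2 this] have "rho \<delta> D x z \<le> c1 + c2" by (rule rho_le)
      then show "rho \<delta> D x z - c2 \<le> c1" by simp
    qed
  qed
  then have "rho \<delta> D x z - rho \<delta> D x y \<le> rho \<delta> D y z"
    by (intro rho_ge) (metis diff_le_eq add.commute le_diff_eq)
  then show ?thesis by simp
qed

lemma rho_lower: "0 < \<epsilon> \<Longrightarrow> \<epsilon> \<le> \<delta>/4 \<Longrightarrow> \<exists>e>0. \<forall>x y. \<epsilon> \<le> dist x y \<longrightarrow> e \<le> rho \<delta> D x y"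
proof -
  assume e: "0 < \<epsilon>" "\<epsilon> \<le> \<delta>/4"
  obtain L1 where L1: "L1 > 0" "\<forall>z w. \<delta>/4 \<le> dist z w \<and> dist z w \<le> \<delta> \<longrightarrow> L1 \<le> D z z w"
    using lowerL[of "\<delta>/4"] dpos by auto
  obtain Le where Le: "Le > 0" "\<forall>z w. \<epsilon> \<le> dist z w \<and> dist z w \<le> \<delta> \<longrightarrow> Le \<le> D z z w"
    using lowerL[OF e(1)] by auto
  show ?thesis
  proof (intro exI[of _ "min L1 Le"] conjI allI impI)
    show "0 < min L1 Le" using L1 Le by simp
    fix x y :: 'a assume d: "\<epsilon> \<le> dist x y"
    show "min L1 Le \<le> rho \<delta> D x y"
    proof (rule rho_ge)
      fix c assume "R \<delta> D x y c"
      from key[OF L1(2) this] show "min L1 Le \<le> c"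
      proof
        assume "dist x y < \<delta>/4 \<and> D x x y \<le> c"
        then have "Le \<le> D x x y" using Le(2) d dpos by auto
        then show ?thesis using \<open>dist x y < \<delta>/4 \<and> D x x y \<le> c\<close> by linarith
      qed simp
    qed
  qed
qed

lemma rho_upper: "0 < e \<Longrightarrow> \<exists>r>0. \<forall>x y. dist x y < r \<longrightarrow> rho \<delta> D x y < e"
proof -
  assume e: "0 < e"
  obtain \<eta> where \<eta>: "\<eta> > 0" "\<forall>x y. dist x y < \<eta> \<longrightarrow> D x x y < e" using unif[OF e] by auto
  show ?thesis
  proof (intro exI[of _ "min \<eta> \<delta>"] conjI allI impI)
    show "0 < min \<eta> \<delta>" using \<eta> dpos by simp
    fix x y :: 'a assume d: "dist x y < min \<eta> \<delta>"
    have "R \<delta> D x y (D x x y)" using d by (intro R.base) auto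
    then have "rho \<delta> D x y \<le> D x x y" by (rule rho_le)
    then show "rho \<delta> D x y < e" using \<eta>(2) d by force
  qed
qed

lemma rho_local: "\<exists>\<eta>>0. \<eta> < \<delta>0 \<and> (\<forall>x y. dist x y < \<eta> \<longrightarrow> rho \<delta> D x y = D x x y)"
proof -
  obtain L1 where L1: "L1 > 0" "\<forall>z w. \<delta>/4 \<le> dist z w \<and> dist z w \<le> \<delta> \<longrightarrow> L1 \<le> D z z w"
    using lowerL[of "\<delta>/4"] dpos by auto
  obtain \<eta> where \<eta>: "\<eta> > 0" "\<forall>x y. dist x y < \<eta> \<longrightarrow> D x x y < L1" using unif[OF L1(1)] by auto
  show ?thesis
  proof (intro exI[of _ "min \<eta> (\<delta>/4)"] conjI allI impI)
    show "0 < min \<eta> (\<delta>/4)" using \<eta> dpos by simp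
    show "min \<eta> (\<delta>/4) < \<delta>0" using dpos dlt by simp
    fix x y :: 'a assume d: "dist x y < min \<eta> (\<delta>/4)"
    have "R \<delta> D x y (D x x y)" using d dpos by (intro R.base) auto
    then have "rho \<delta> D x y \<le> D x x y" by (rule rho_le)
    moreover have "D x x y \<le> rho \<delta> D x y"
    proof (rule rho_ge)
      fix c assume "R \<delta> D x y c"
      from key[OF L1(2) this] show "D x x y \<le> c" using \<eta>(2) d by force
    qed
    ultimately show "rho \<delta> D x y = D x x y" by simp
  qed
qed

end

theorem mainTheorem20:
  fixes f g :: "'a::metric_space \<Rightarrow> 'a"
    and D :: "'a \<Rightarrow> 'a \<Rightarrow> 'a \<Rightarrow> real"
    and \<delta>0 \<delta> :: real
  assumes "compact (UNIV :: 'a set)"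
    and "connected (UNIV :: 'a set)"
    and "homeomorphism UNIV UNIV f g"
    and "local_metric \<delta>0 D"
    and "catenary_local \<delta>0 f g D"
    and "0 < \<delta>" and "\<delta> < \<delta>0"
    and "locally_minimizing \<delta> D"
  shows "catenary_metric f g (rho \<delta> D)"
proof -
  interpret setting D \<delta>0 \<delta> using assms by unfold_locales auto
  have met: "is_metric_on UNIV (rho \<delta> D)"
    unfolding is_metric_on_def
  proof (intro conjI ballI)
    fix y z :: 'a
    show "0 \<le> rho \<delta> D y z" by (rule rho_nonneg)
    show "rho \<delta> D y z = rho \<delta> D z y" by (rule rho_sym)
    show "(rho \<delta> D y z = 0) = (y = z)"
    proof
      assume h: "rho \<delta> D y z = 0"
      show "y = z"
      proof (rule ccontr)
        assume "y \<noteq> z"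
        then have p: "0 < min (dist y z) (\<delta>/4)" using dpos by simp
        obtain e where "e > 0" "\<forall>a b. min (dist y z) (\<delta>/4) \<le> dist a b \<longrightarrow> e \<le> rho \<delta> D a b"
          using rho_lower[OF p min.cobounded2] by auto
        then have "e \<le> rho \<delta> D y z" by auto
        with h \<open>e > 0\<close> show False by simp
      qed
    qed (simp add: rho_refl)
    fix w :: 'a
    show "rho \<delta> D y w \<le> rho \<delta> D y z + rho \<delta> D z w" by (rule rho_tri)
  qed
  have top: "\<forall>U. open U \<longleftrightarrow> (\<forall>x\<in>U. \<exists>e>0. \<forall>y. rho \<delta> D x y < e \<longrightarrow> y \<in> U)"
  proof (intro allI iffI ballI)
    fix U :: "'a set" and x assume U: "open U" and x: "x \<in> U"
    obtain r0 where r0: "r0 > 0" "\<forall>y. dist y x < r0 \<longrightarrow> y \<in> U" using U x unfolding open_dist by blast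
    have p: "0 < min r0 (\<delta>/4)" using r0 dpos by simp
    obtain e where e: "e > 0" "\<forall>x y. min r0 (\<delta>/4) \<le> dist x y \<longrightarrow> e \<le> rho \<delta> D x y"
      using rho_lower[OF p min.cobounded2] by auto
    show "\<exists>e>0. \<forall>y. rho \<delta> D x y < e \<longrightarrow> y \<in> U"
    proof (intro exI[of _ e] conjI allI impI)
      fix y assume "rho \<delta> D x y < e"
      then have "dist x y < min r0 (\<delta>/4)" using e(2) by (meson not_le order.strict_iff_not)
      then show "y \<in> U" using r0(2) by (simp add: dist_commute)
    qed (rule e(1))
  next
    fix U :: "'a set" assume h: "\<forall>x\<in>U. \<exists>e>0. \<forall>y. rho \<delta> D x y < e \<longrightarrow> y \<in> U"
    show "open U" unfolding open_dist
    proof (intro ballI)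
      fix x assume "x \<in> U"
      then obtain e where e: "e > 0" "\<forall>y. rho \<delta> D x y < e \<longrightarrow> y \<in> U" using h by blast
      obtain r where r: "r > 0" "\<forall>x y. dist x y < r \<longrightarrow> rho \<delta> D x y < e" using rho_upper[OF e(1)] by auto
      show "\<exists>e>0. \<forall>y. dist y x < e \<longrightarrow> y \<in> U"
        using r e(2) by (intro exI[of _ r]) (auto simp: dist_commute)
    qed
  qed
  obtain \<eta> where \<eta>: "\<eta> > 0" "\<eta> < \<delta>0" "\<forall>x y. dist x y < \<eta> \<longrightarrow> rho \<delta> D x y = D x x y"
    using rho_local by auto
  have cf: "continuous_on UNIV f" and cg: "continuous_on UNIV g"
    using assms(3) unfolding homeomorphism_def by auto
  obtain df where df: "df > 0" "\<forall>x y. dist x y < df \<longrightarrow> dist (f x) (f y) < \<eta>"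
    using compact_uniformly_continuous[OF cf assms(1)] \<eta>(1) unfolding uniformly_continuous_on_def
    by (metis UNIV_I dist_commute)
  obtain dg where dg: "dg > 0" "\<forall>x y. dist x y < dg \<longrightarrow> dist (g x) (g y) < \<eta>"
    using compact_uniformly_continuous[OF cg assms(1)] \<eta>(1) unfolding uniformly_continuous_on_def
    by (metis UNIV_I dist_commute)
  have cat: "\<forall>x y. dist x y \<le> min (min \<eta> df) dg / 2 \<longrightarrow>
      rho \<delta> D (f x) (f y) - 2 * rho \<delta> D x y + rho \<delta> D (g x) (g y) = rho \<delta> D x y"
  proof (intro allI impI)
    fix x y :: 'a assume d: "dist x y \<le> min (min \<eta> df) dg / 2"
    have dx: "dist x y < \<eta>" "dist x y < df" "dist x y < dg" using d \<eta> df dg by auto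
    have fx: "dist (f x) (f y) < \<eta>" and gx: "dist (g x) (g y) < \<eta>" using dx df dg by auto
    have "D (f x) (f x) (f y) - 2 * D x x y + D (g x) (g x) (g y) = D x x y"
    proof -
      have "(x,x,y) \<in> triples \<delta>0 \<and> (f x, f x, f y) \<in> triples \<delta>0 \<and> (g x, g x, g y) \<in> triples \<delta>0"
        using dx fx gx \<eta>(2) assms(7) assms(6) unfolding triples_def by auto
      then show ?thesis using assms(5) unfolding catenary_local_def by blast
    qed
    then show "rho \<delta> D (f x) (f y) - 2 * rho \<delta> D x y + rho \<delta> D (g x) (g y) = rho \<delta> D x y"
      using \<eta>(3) dx fx gx by simp
  qed
  show ?thesis unfolding catenary_metric_def metric_defining_topology_def
    using met top cat \<eta>(1) df(1) dg(1)
    by (intro conjI exI[of _ "min (min \<eta> df) dg / 2"]) auto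
qed

end
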